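(* Let $0<\varepsilon'<1$ and $\varepsilon=\varepsilon'/2$. Algorithm A run on $G$ with parameter $\varepsilon$ terminates and outputs a matching $M$ of $G$ with $w(M)\ge(1-\varepsilon')\,w(M^* )$, where $M^*$ is a maximum weight matching of $G$.
   Context: Let $G=(U\cup V,E)$ be a bipartite graph with real edge weights $w(uv)\ge 1$ for all $uv\in E$, $N(x)$ the neighbourhood of vertex $x$, and $w(F)=\sum_{e\in F}w(e)$. For $0<\varepsilon<1$ let $\mathrm{iLog}(x)=\lfloor\log_{1+\varepsilon}x\rfloor$, $k_{max}=\mathrm{iLog}(\max_{e\in E}w(e))$, $k_{min}$ the smallest integer with $(1+\varepsilon)^{-k_{min}}\le\varepsilon$, and $j_{uv}=\mathrm{iLog}(w(uv))$. Algorithm A (MultiplicativeAuction): set $M=\emptyset$, $y_u=0$ for all $u\in U$, $j_v=k_{max}$ for all $v\in V$. For each $v\in V$ build a queue $Q_v$ containing the pair $(i,uv)$ for every $u\in N(v)$ and every integer $i$ with $-k_{min}\le i\le j_{uv}$, ordered so that the first components are non-increasing (ties arbitrary). Then for each $v\in V$ (in arbitrary order) call $\textsc{MatchR}(v)$, and finally output $M$. Here $\textsc{MatchR}(v)$ is: while $Q_v$ is nonempty: remove the first pair $(j,uv)$ of $Q_v$; set $j_v\leftarrow j$; let $\mathrm{util}(uv)=w(uv)-y_u$ (with the current $y_u$); if $\mathrm{util}(uv)\ge(1+\varepsilon)^j$ then set $y_u\leftarrow y_u+\varepsilon\cdot\mathrm{util}(uv)$, and if $u$ is currently matched in $M$ to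 some $v'$, replace $uv'$ by $uv$ in $M$, call $\textsc{MatchR}(v')$ and then return; otherwise add $uv$ to $M$ and return. (If the test fails, continue the while-loop.) *)

theory Defs
  imports Main "HOL-Library.Multiset" Complex_Main
begin

text \<open>Bipartite graph: U :: 'u set, V :: 'v set, edges E \<subseteq> U \<times> V, an edge uv is the pair (u,v).\<close>

definition is_matching :: "('u \<times> 'v) set \<Rightarrow> ('u \<times> 'v) set \<Rightarrow> bool" where
  "is_matching E M \<longleftrightarrow> M \<subseteq> E \<and>
     (\<forall>u v v'. (u,v) \<in> M \<longrightarrow> (u,v') \<in> M \<longrightarrow> v = v') \<and>
     (\<forall>u u' v. (u,v) \<in> M \<longrightarrow> (u',v) \<in> M \<longrightarrow> u = u')"

definition nbh :: "('u \<times> 'v) set \<Rightarrow> 'v \<Rightarrow> 'u set" where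
  "nbh E v = {u. (u,v) \<in> E}"

definition iLog :: "real \<Rightarrow> real \<Rightarrow> int" where
  "iLog eps x = \<lfloor>log (1 + eps) x\<rfloor>"

definition kmax :: "real \<Rightarrow> ('u \<times> 'v) set \<Rightarrow> ('u \<times> 'v \<Rightarrow> real) \<Rightarrow> int" where
  "kmax eps E w = iLog eps (Max (w ` E))"

definition kmin :: "real \<Rightarrow> int" where
  "kmin eps = int (LEAST k::nat. (1 + eps) powr (- real k) \<le> eps)"

definition jedge :: "real \<Rightarrow> ('u \<times> 'v \<Rightarrow> real) \<Rightarrow> 'u \<times> 'v \<Rightarrow> int" where
  "jedge eps w e = iLog eps (w e)"

definition valid_queue ::
  "real \<Rightarrow> ('u \<times> 'v) set \<Rightarrow> ('u \<times> 'v \<Rightarrow> real) \<Rightarrow> 'v \<Rightarrow> (int \<times> ('u \<times> 'v)) list \<Rightarrow> bool" where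
  "valid_queue eps E w v q \<longleftrightarrow>
     distinct q \<and>
     set q = {(i, (u, v)) | i u. u \<in> nbh E v \<and> - kmin eps \<le> i \<and> i \<le> jedge eps w (u, v)} \<and>
     sorted_wrt (\<lambda>a b. fst a \<ge> fst b) q"

type_synonym ('u,'v) state =
  "('u \<times> 'v) set \<times> ('u \<Rightarrow> real) \<times> ('v \<Rightarrow> int) \<times> ('v \<Rightarrow> (int \<times> ('u \<times> 'v)) list)"
  \<comment> \<open>(M, y, j, Q)\<close>

text \<open>Big-step semantics of MatchR(c): matchR eps w c s s' means that the call MatchR(c)
  started in state s terminates in state s'. The recursive call followed by return is a tail call.\<close>
inductive matchR :: "real \<Rightarrow> ('u \<times> 'v \<Rightarrow> real) \<Rightarrow> 'v \<Rightarrow> ('u,'v) state \<Rightarrow> ('u,'v) state \<Rightarrow> bool"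
  for eps w where
  empty: "Q c = [] \<Longrightarrow> matchR eps w c (M, y, jv, Q) (M, y, jv, Q)"
| fail: "\<lbrakk> Q c = (j, (u, v)) # rest; w (u, v) - y u < (1 + eps) powr (real_of_int j);
          matchR eps w c (M, y, jv(c := j), Q(c := rest)) s' \<rbrakk>
         \<Longrightarrow> matchR eps w c (M, y, jv, Q) s'"
| free: "\<lbrakk> Q c = (j, (u, v)) # rest; w (u, v) - y u \<ge> (1 + eps) powr (real_of_int j);
          \<not> (\<exists>v'. (u, v') \<in> M) \<rbrakk>
         \<Longrightarrow> matchR eps w c (M, y, jv, Q)
               (insert (u, v) M, y(u := y u + eps * (w (u, v) - y u)), jv(c := j), Q(c := rest))"
| steal: "\<lbrakk> Q c = (j, (u, v)) # rest; w (u, v) - y u \<ge> (1 + eps) powr (real_of_int j);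
          (u, v') \<in> M;
          matchR eps w v' (insert (u, v) (M - {(u, v')}), y(u := y u + eps * (w (u, v) - y u)),
                           jv(c := j), Q(c := rest)) s' \<rbrakk>
         \<Longrightarrow> matchR eps w c (M, y, jv, Q) s'"

inductive alg_loop :: "real \<Rightarrow> ('u \<times> 'v \<Rightarrow> real) \<Rightarrow> 'v list \<Rightarrow> ('u,'v) state \<Rightarrow> ('u,'v) state \<Rightarrow> bool"
  for eps w where
  nil: "alg_loop eps w [] s s"
| cons: "\<lbrakk> matchR eps w c s s'; alg_loop eps w cs s' s'' \<rbrakk> \<Longrightarrow> alg_loop eps w (c # cs) s s''"

definition algA :: "real \<Rightarrow> ('u \<times> 'v) set \<Rightarrow> ('u \<times> 'v \<Rightarrow> real) \<Rightarrow>
    ('v \<Rightarrow> (int \<times> ('u \<times> 'v)) list) \<Rightarrow> 'v list \<Rightarrow> ('u \<times> 'v) set \<Rightarrow> bool" where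
  "algA eps E w Q0 vs M \<longleftrightarrow>
     (\<exists>y jv Q. alg_loop eps w vs ({}, (\<lambda>_. 0), (\<lambda>_. kmax eps E w), Q0) (M, y, jv, Q))"

end

theory Submission imports Defs begin

lemma kmin_bound:
  fixes eps :: real assumes e0: "0 < eps" and e1: "eps < 1"
  shows "(1 + eps) powr (- real_of_int (kmin eps)) \<le> eps" "0 \<le> kmin eps"
proof -
  have ex: "\<exists>k::nat. (1 + eps) powr (- real k) \<le> eps"
  proof -
    obtain n where n: "1/eps < (1+eps)^n" using real_arch_pow[of "1+eps" "1/eps"] e0 by auto
    have "(1 + eps) powr (- real n) = 1 / (1+eps)^n"
      using e0 by (simp add: powr_minus powr_realpow divide_inverse)
    also have "\<dots> \<le> eps" using n e0
      by (simp add: field_simps)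
    finally show ?thesis by blast
  qed
  have "(1 + eps) powr (- real (LEAST k::nat. (1 + eps) powr (- real k) \<le> eps)) \<le> eps"
    by (rule LeastI_ex[OF ex])
  then show "(1 + eps) powr (- real_of_int (kmin eps)) \<le> eps" by (simp add: kmin_def)
  show "0 \<le> kmin eps" by (simp add: kmin_def)
qed

lemma floor_bound:
  fixes eps x :: real assumes e0: "0 < eps" and x: "1 \<le> x"
  shows "x < (1 + eps) powr (real_of_int (iLog eps x) + 1)" "0 \<le> iLog eps x"
proof -
  have "log (1+eps) x < real_of_int \<lfloor>log (1 + eps) x\<rfloor> + 1" by linarith
  then have "(1+eps) powr (log (1+eps) x) < (1 + eps) powr (real_of_int (iLog eps x) + 1)"
    unfolding iLog_def by (rule powr_less_mono) (use e0 in auto)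
  then show "x < (1 + eps) powr (real_of_int (iLog eps x) + 1)" using e0 x by simp
  show "0 \<le> iLog eps x" unfolding iLog_def using e0 x by simp
qed


locale alg =
  fixes eps :: real and U :: "'u set" and V :: "'v set" and E :: "('u \<times> 'v) set"
    and w :: "'u \<times> 'v \<Rightarrow> real" and Q0 :: "'v \<Rightarrow> (int \<times> ('u \<times> 'v)) list"
  assumes finU: "finite U" and finV: "finite V" and EUV: "E \<subseteq> U \<times> V"
    and w1: "\<forall>e\<in>E. 1 \<le> w e" and e0: "0 < eps" and e1: "eps < 1/2"
    and vq: "\<forall>v\<in>V. valid_queue eps E w v (Q0 v)"
begin

fun Inv :: "'v set \<Rightarrow> ('u,'v) state \<Rightarrow> bool" where
  "Inv S (M, y, jv, Q) \<longleftrightarrow>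
     M \<subseteq> E \<and>
     (\<forall>u v v'. (u,v) \<in> M \<longrightarrow> (u,v') \<in> M \<longrightarrow> v = v') \<and>
     (\<forall>u u' v. (u,v) \<in> M \<longrightarrow> (u',v) \<in> M \<longrightarrow> u = u') \<and>
     (\<forall>u. 0 \<le> y u) \<and>
     (\<forall>u. y u \<noteq> 0 \<longrightarrow> (\<exists>v. (u,v) \<in> M)) \<and>
     (\<forall>v\<in>V. \<exists>n. Q v = drop n (Q0 v)) \<and>
     (\<forall>v\<in>V. \<forall>k u'. (k,(u',v)) \<in> set (Q0 v) \<longrightarrow> (k,(u',v)) \<notin> set (Q v) \<longrightarrow>
          w (u',v) - y u' < (1+eps) powr (real_of_int k)) \<and>
     (\<forall>u v. (u,v) \<in> M \<longrightarrow> v \<in> S \<and> - kmin eps \<le> jv v \<and> (\<forall>p\<in>set (Q v). fst p \<le> jv v) \<and>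
          (1-eps) * (1+eps) powr (real_of_int (jv v)) \<le> w (u,v) - y u) \<and>
     (\<forall>v\<in>S. (\<forall>u. (u,v) \<notin> M) \<longrightarrow> Q v = [])"

declare Inv.simps [simp del]

lemma Inv_i123:
  assumes "Inv S (M,y,jv,Q)"
  shows "M \<subseteq> E" "\<forall>u v v'. (u,v) \<in> M \<longrightarrow> (u,v') \<in> M \<longrightarrow> v = v'"
    "\<forall>u u' v. (u,v) \<in> M \<longrightarrow> (u',v) \<in> M \<longrightarrow> u = u'"
proof -
  note II = assms[unfolded Inv.simps]
  show "M \<subseteq> E" using II by (elim conjE) assumption
  show "\<forall>u v v'. (u,v) \<in> M \<longrightarrow> (u,v') \<in> M \<longrightarrow> v = v'" using II by (elim conjE) assumption
  show "\<forall>u u' v. (u,v) \<in> M \<longrightarrow> (u',v) \<in> M \<longrightarrow> u = u'" using II by (elim conjE) assumption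
qed

lemma q0mem:
  assumes "v \<in> V" "p \<in> set (Q0 v)"
  shows "\<exists>i u. p = (i,(u,v)) \<and> (u,v) \<in> E \<and> - kmin eps \<le> i \<and> i \<le> jedge eps w (u,v)"
  using vq assms unfolding valid_queue_def nbh_def by auto

lemma q0in:
  assumes "v \<in> V" "(u,v) \<in> E" "- kmin eps \<le> i" "i \<le> jedge eps w (u,v)"
  shows "(i,(u,v)) \<in> set (Q0 v)"
  using vq assms unfolding valid_queue_def nbh_def by auto

lemma sorted_q:
  assumes "v \<in> V" "Q v = drop n (Q0 v)"
  shows "sorted_wrt (\<lambda>a b. fst b \<le> fst a) (Q v)"
  using vq assms unfolding valid_queue_def by auto

lemma P_pos: "0 < (1+eps) powr (x::real)" using e0 by simp

lemma match_step:
  assumes I: "Inv S (M, y, jv, Q)" and cV: "c \<in> V" and cu: "\<forall>x. (x,c) \<notin> M"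
    and hd: "Q c = (j,(u,v)) # rest"
    and succ: "w (u,v) - y u \<ge> (1+eps) powr (real_of_int j)"
    and M0: "M0 = {e\<in>M. fst e \<noteq> u}" and S0: "S0 = S - snd ` {e\<in>M. fst e = u}"
  shows "v = c \<and> Inv (insert c S0) (insert (u,v) M0, y(u := y u + eps * (w (u,v) - y u)), jv(c := j), Q(c := rest))"
proof -
  note II = I[unfolded Inv.simps]
  have i1: "M \<subseteq> E"
    using II by (elim conjE) assumption
  have i2: "\<forall>u v v'. (u,v) \<in> M \<longrightarrow> (u,v') \<in> M \<longrightarrow> v = v'"
    using II by (elim conjE) assumption
  have i3: "\<forall>u u' v. (u,v) \<in> M \<longrightarrow> (u',v) \<in> M \<longrightarrow> u = u'"
    using II by (elim conjE) assumption
  have i4: "\<forall>u. 0 \<le> y u"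
    using II by (elim conjE) assumption
  have i5: "\<forall>u. y u \<noteq> 0 \<longrightarrow> (\<exists>v. (u,v) \<in> M)"
    using II by (elim conjE) assumption
  have i6: "\<forall>v\<in>V. \<exists>n. Q v = drop n (Q0 v)"
    using II by (elim conjE) assumption
  have i7: "\<forall>v\<in>V. \<forall>k u'. (k,(u',v)) \<in> set (Q0 v) \<longrightarrow> (k,(u',v)) \<notin> set (Q v) \<longrightarrow>
          w (u',v) - y u' < (1+eps) powr (real_of_int k)"
    using II by (elim conjE) assumption
  have i8: "\<forall>u v. (u,v) \<in> M \<longrightarrow> v \<in> S \<and> - kmin eps \<le> jv v \<and> (\<forall>p\<in>set (Q v). fst p \<le> jv v) \<and>
          (1-eps) * (1+eps) powr (real_of_int (jv v)) \<le> w (u,v) - y u"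
    using II by (elim conjE) assumption
  have i9: "\<forall>v\<in>S. (\<forall>u. (u,v) \<notin> M) \<longrightarrow> Q v = []"
    using II by (elim conjE) assumption

  obtain n where n: "Q c = drop n (Q0 c)" using i6 cV by auto
  have hmem: "(j,(u,v)) \<in> set (Q0 c)" using hd n set_drop_subset by (metis list.set_intros(1) subsetD)
  from q0mem[OF cV hmem] have vc: "v = c" and uE: "(u,c) \<in> E" and jlo: "- kmin eps \<le> j"
    and jhi: "j \<le> jedge eps w (u,c)" by auto
  have srt: "sorted_wrt (\<lambda>a b. fst b \<le> fst a) (Q c)" using sorted_q[of c Q n] cV n by blast
  have restle: "\<forall>p\<in>set rest. fst p \<le> j" using srt hd by auto
  have allle: "\<forall>p\<in>set (Q c). fst p \<le> j" using restle hd by auto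
  have rest_eq: "rest = drop (Suc n) (Q0 c)" using hd n by (metis drop_Suc list.sel(3) tl_drop)
  define t where "t = w (u,c) - y u"
  have tge: "(1+eps) powr (real_of_int j) \<le> t" using succ vc t_def by simp
  have tpos: "0 < t" using tge P_pos by (meson less_le_trans)
  have tlt: "t < (1+eps) powr (real_of_int j + 1)"
  proof (cases "j + 1 \<le> jedge eps w (u,c)")
    case True
    have "(j+1,(u,c)) \<in> set (Q0 c)" by (rule q0in[OF cV uE]) (use jlo True in auto)
    moreover have "(j+1,(u,c)) \<notin> set (Q c)" using allle by fastforce
    ultimately have "w (u,c) - y u < (1+eps) powr (real_of_int (j+1))" using i7 cV by blast
    then show ?thesis by (simp add: t_def)
  next
    case False
    then have jj: "j = jedge eps w (u,c)" using jhi by simp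
    have w1': "1 \<le> w (u,c)" using w1 uE by auto
    have "w (u,c) < (1+eps) powr (real_of_int j + 1)"
      using floor_bound(1)[OF e0 w1'] jj by (simp add: jedge_def)
    then show ?thesis using i4 t_def by (smt (verit))
  qed
  have newval: "(1-eps) * t < (1+eps) powr (real_of_int j)"
  proof -
    have "(1-eps) * t < (1-eps) * (1+eps) powr (real_of_int j + 1)"
      using tlt e1 by simp
    also have "\<dots> = (1-eps)*(1+eps) * (1+eps) powr (real_of_int j)"
    proof -
      have "(1+eps) powr (real_of_int j + 1) = (1+eps) powr (real_of_int j) * (1+eps) powr 1"
        by (rule powr_add)
      also have "(1+eps) powr (1::real) = 1+eps" using e0 by simp
      finally show ?thesis by simp
    qed
    also have "\<dots> \<le> (1+eps) powr (real_of_int j)"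
    proof -
      have "(1-eps)*(1+eps) \<le> 1" by (simp add: algebra_simps)
      then show ?thesis using P_pos[of "real_of_int j"] mult_right_mono[of "(1-eps)*(1+eps)" 1 "(1+eps) powr (real_of_int j)"] by simp
    qed
    finally show ?thesis .
  qed
  define y' where "y' = y(u := y u + eps * t)"
  have yy: "\<forall>x. y x \<le> y' x" using tpos e0 by (simp add: y'_def)
  have y'u: "w (u,c) - y' u = (1-eps) * t" by (simp add: y'_def t_def algebra_simps)
  define M' where "M' = insert (u,c) M0"
  define jv' where "jv' = jv(c := j)"
  define Q' where "Q' = Q(c := rest)"
  have M0M: "M0 \<subseteq> M" using M0 by auto
  have n1: "M' \<subseteq> E" using M0M i1 uE M'_def by auto
  have n2: "\<forall>a b b'. (a,b) \<in> M' \<longrightarrow> (a,b') \<in> M' \<longrightarrow> b = b'"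
    using i2 M0 M'_def by auto
  have n3: "\<forall>a a' b. (a,b) \<in> M' \<longrightarrow> (a',b) \<in> M' \<longrightarrow> a = a'"
    using i3 M0 M'_def cu by auto
  have n4: "\<forall>x. 0 \<le> y' x" using i4 yy by (meson order_trans)
  have n5: "\<forall>x. y' x \<noteq> 0 \<longrightarrow> (\<exists>b. (x,b) \<in> M')"
  proof (intro allI impI)
    fix x assume "y' x \<noteq> 0"
    show "\<exists>b. (x,b) \<in> M'"
    proof (cases "x = u")
      case True then show ?thesis using M'_def by auto
    next
      case False
      then have "y x \<noteq> 0" using \<open>y' x \<noteq> 0\<close> by (simp add: y'_def)
      then obtain b where "(x,b) \<in> M" using i5 by auto
      then show ?thesis using False M0 M'_def by auto
    qed
  qed
  have n6: "\<forall>b\<in>V. \<exists>m. Q' b = drop m (Q0 b)" using i6 rest_eq Q'_def by auto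
  have n7: "\<forall>b\<in>V. \<forall>k u'. (k,(u',b)) \<in> set (Q0 b) \<longrightarrow> (k,(u',b)) \<notin> set (Q' b) \<longrightarrow>
          w (u',b) - y' u' < (1+eps) powr (real_of_int k)"
  proof (intro ballI allI impI)
    fix b k u' assume bV: "b \<in> V" and inq: "(k,(u',b)) \<in> set (Q0 b)" and nq: "(k,(u',b)) \<notin> set (Q' b)"
    show "w (u',b) - y' u' < (1+eps) powr (real_of_int k)"
    proof (cases "b = c \<and> (k,(u',b)) = (j,(u,c))")
      case True
      then show ?thesis using y'u newval by auto
    next
      case False
      then have "(k,(u',b)) \<notin> set (Q b)" using nq hd by (auto simp: Q'_def split: if_splits)
      then have "w (u',b) - y u' < (1+eps) powr (real_of_int k)" using i7 bV inq by blast
      then show ?thesis using yy[rule_format, of u'] by linarith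
    qed
  qed
  have n8: "\<forall>a b. (a,b) \<in> M' \<longrightarrow> b \<in> insert c S0 \<and> - kmin eps \<le> jv' b \<and> (\<forall>p\<in>set (Q' b). fst p \<le> jv' b) \<and>
          (1-eps) * (1+eps) powr (real_of_int (jv' b)) \<le> w (a,b) - y' a"
  proof (intro allI impI)
    fix a b assume ab: "(a,b) \<in> M'"
    show "b \<in> insert c S0 \<and> - kmin eps \<le> jv' b \<and> (\<forall>p\<in>set (Q' b). fst p \<le> jv' b) \<and>
          (1-eps) * (1+eps) powr (real_of_int (jv' b)) \<le> w (a,b) - y' a"
    proof (cases "(a,b) = (u,c)")
      case True
      then show ?thesis using jlo restle y'u tge e1 by (auto simp: jv'_def Q'_def)
    next
      case False
      then have abM: "(a,b) \<in> M" and au: "a \<noteq> u" using ab M0 M'_def by auto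
      have bc: "b \<noteq> c" using abM cu by auto
      have bS0: "b \<in> S0"
      proof -
        have "b \<in> S" using i8 abM by auto
        moreover have "b \<notin> snd ` {e\<in>M. fst e = u}"
        proof
          assume "b \<in> snd ` {e\<in>M. fst e = u}"
          then have "(u,b) \<in> M" by auto
          then show False using i3 abM au by blast
        qed
        ultimately show ?thesis using S0 by auto
      qed
      have "y' a = y a" using au by (simp add: y'_def)
      then show ?thesis using i8 abM bc bS0 by (auto simp: jv'_def Q'_def)
    qed
  qed
  have n9: "\<forall>b\<in>insert c S0. (\<forall>a. (a,b) \<notin> M') \<longrightarrow> Q' b = []"
  proof (intro ballI impI)
    fix b assume bS: "b \<in> insert c S0" and un: "\<forall>a. (a,b) \<notin> M'"
    have bc: "b \<noteq> c" using un M'_def by auto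
    then have bS': "b \<in> S" and bn: "b \<notin> snd ` {e\<in>M. fst e = u}" using bS S0 by auto
    have "\<forall>a. (a,b) \<notin> M"
    proof (intro allI notI)
      fix a assume abM: "(a,b) \<in> M"
      show False
      proof (cases "a = u")
        case True then show False using bn abM by force
      next
        case False then show False using un abM M0 M'_def by auto
      qed
    qed
    then show "Q' b = []" using i9 bS' bc by (simp add: Q'_def)
  qed
  have "Inv (insert c S0) (M', y', jv', Q')"
    unfolding Inv.simps by (intro conjI n1 n2 n3 n4 n5 n6 n7 n8 n9)
  from vc this show ?thesis unfolding M'_def y'_def jv'_def Q'_def t_def by (simp del: Inv.simps)
qed


lemma unm_after: "\<forall>a b c'. (a,c')\<in>M \<longrightarrow> (b,c')\<in>M \<longrightarrow> a=b \<Longrightarrow> (u,v')\<in>M \<Longrightarrow> v' \<noteq> v \<Longrightarrow> \<forall>x. (x,v') \<notin> insert (u,v) (M - {(u,v')})"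
  by blast

lemma Inv_matched:
  assumes "Inv S (M,y,jv,Q)" "(x,c) \<in> M" shows "c \<in> S"
proof -
  have "\<forall>u v. (u,v) \<in> M \<longrightarrow> v \<in> S \<and> - kmin eps \<le> jv v \<and> (\<forall>p\<in>set (Q v). fst p \<le> jv v) \<and>
          (1-eps) * (1+eps) powr (real_of_int (jv v)) \<le> w (u,v) - y u"
    using assms(1)[unfolded Inv.simps] by (elim conjE) assumption
  then show ?thesis using assms(2) by blast
qed

lemma Inv_empty:
  assumes I: "Inv S (M, y, jv, Q)" and e: "Q c = []"
  shows "Inv (insert c S) (M, y, jv, Q)"
proof -
  note II = I[unfolded Inv.simps]
  have i1: "M \<subseteq> E"
    using II by (elim conjE) assumption
  have i2: "\<forall>u v v'. (u,v) \<in> M \<longrightarrow> (u,v') \<in> M \<longrightarrow> v = v'"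
    using II by (elim conjE) assumption
  have i3: "\<forall>u u' v. (u,v) \<in> M \<longrightarrow> (u',v) \<in> M \<longrightarrow> u = u'"
    using II by (elim conjE) assumption
  have i4: "\<forall>u. 0 \<le> y u"
    using II by (elim conjE) assumption
  have i5: "\<forall>u. y u \<noteq> 0 \<longrightarrow> (\<exists>v. (u,v) \<in> M)"
    using II by (elim conjE) assumption
  have i6: "\<forall>v\<in>V. \<exists>n. Q v = drop n (Q0 v)"
    using II by (elim conjE) assumption
  have i7: "\<forall>v\<in>V. \<forall>k u'. (k,(u',v)) \<in> set (Q0 v) \<longrightarrow> (k,(u',v)) \<notin> set (Q v) \<longrightarrow>
          w (u',v) - y u' < (1+eps) powr (real_of_int k)"
    using II by (elim conjE) assumption
  have i8: "\<forall>u v. (u,v) \<in> M \<longrightarrow> v \<in> S \<and> - kmin eps \<le> jv v \<and> (\<forall>p\<in>set (Q v). fst p \<le> jv v) \<and>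
          (1-eps) * (1+eps) powr (real_of_int (jv v)) \<le> w (u,v) - y u"
    using II by (elim conjE) assumption
  have i9: "\<forall>v\<in>S. (\<forall>u. (u,v) \<notin> M) \<longrightarrow> Q v = []"
    using II by (elim conjE) assumption

  have n8: "\<forall>u v. (u,v) \<in> M \<longrightarrow> v \<in> insert c S \<and> - kmin eps \<le> jv v \<and> (\<forall>p\<in>set (Q v). fst p \<le> jv v) \<and>
          (1-eps) * (1+eps) powr (real_of_int (jv v)) \<le> w (u,v) - y u" using i8 by blast
  have n9: "\<forall>v\<in>insert c S. (\<forall>u. (u,v) \<notin> M) \<longrightarrow> Q v = []" using i9 e by blast
  show ?thesis unfolding Inv.simps by (intro conjI i1 i2 i3 i4 i5 i6 i7 n8 n9)
qed

lemma fail_step: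
  assumes I: "Inv S (M, y, jv, Q)" and cV: "c \<in> V" and cu: "\<forall>x. (x,c) \<notin> M"
    and hd: "Q c = (j,(u,v)) # rest"
    and fl: "w (u,v) - y u < (1+eps) powr (real_of_int j)"
  shows "Inv S (M, y, jv(c := j), Q(c := rest))"
proof -
  note II = I[unfolded Inv.simps]
  have i1: "M \<subseteq> E"
    using II by (elim conjE) assumption
  have i2: "\<forall>u v v'. (u,v) \<in> M \<longrightarrow> (u,v') \<in> M \<longrightarrow> v = v'"
    using II by (elim conjE) assumption
  have i3: "\<forall>u u' v. (u,v) \<in> M \<longrightarrow> (u',v) \<in> M \<longrightarrow> u = u'"
    using II by (elim conjE) assumption
  have i4: "\<forall>u. 0 \<le> y u"
    using II by (elim conjE) assumption
  have i5: "\<forall>u. y u \<noteq> 0 \<longrightarrow> (\<exists>v. (u,v) \<in> M)"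
    using II by (elim conjE) assumption
  have i6: "\<forall>v\<in>V. \<exists>n. Q v = drop n (Q0 v)"
    using II by (elim conjE) assumption
  have i7: "\<forall>v\<in>V. \<forall>k u'. (k,(u',v)) \<in> set (Q0 v) \<longrightarrow> (k,(u',v)) \<notin> set (Q v) \<longrightarrow>
          w (u',v) - y u' < (1+eps) powr (real_of_int k)"
    using II by (elim conjE) assumption
  have i8: "\<forall>u v. (u,v) \<in> M \<longrightarrow> v \<in> S \<and> - kmin eps \<le> jv v \<and> (\<forall>p\<in>set (Q v). fst p \<le> jv v) \<and>
          (1-eps) * (1+eps) powr (real_of_int (jv v)) \<le> w (u,v) - y u"
    using II by (elim conjE) assumption
  have i9: "\<forall>v\<in>S. (\<forall>u. (u,v) \<notin> M) \<longrightarrow> Q v = []"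
    using II by (elim conjE) assumption

  obtain n where n: "Q c = drop n (Q0 c)" using i6 cV by auto
  have hmem: "(j,(u,v)) \<in> set (Q0 c)" using hd n set_drop_subset by (metis list.set_intros(1) subsetD)
  from q0mem[OF cV hmem] have vc: "v = c" by auto
  have rest_eq: "rest = drop (Suc n) (Q0 c)" using hd n by (metis drop_Suc list.sel(3) tl_drop)
  define jv' where "jv' = jv(c := j)"
  define Q' where "Q' = Q(c := rest)"
  have n6: "\<forall>b\<in>V. \<exists>m. Q' b = drop m (Q0 b)" using i6 rest_eq Q'_def by auto
  have n7: "\<forall>b\<in>V. \<forall>k u'. (k,(u',b)) \<in> set (Q0 b) \<longrightarrow> (k,(u',b)) \<notin> set (Q' b) \<longrightarrow>
          w (u',b) - y u' < (1+eps) powr (real_of_int k)"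
  proof (intro ballI allI impI)
    fix b k u' assume bV: "b \<in> V" and inq: "(k,(u',b)) \<in> set (Q0 b)" and nq: "(k,(u',b)) \<notin> set (Q' b)"
    show "w (u',b) - y u' < (1+eps) powr (real_of_int k)"
    proof (cases "b = c \<and> (k,(u',b)) = (j,(u,c))")
      case True
      then show ?thesis using fl vc by auto
    next
      case False
      then have "(k,(u',b)) \<notin> set (Q b)" using nq hd vc by (auto simp: Q'_def split: if_splits)
      then show ?thesis using i7 bV inq by blast
    qed
  qed
  have n8: "\<forall>a b. (a,b) \<in> M \<longrightarrow> b \<in> S \<and> - kmin eps \<le> jv' b \<and> (\<forall>p\<in>set (Q' b). fst p \<le> jv' b) \<and>
          (1-eps) * (1+eps) powr (real_of_int (jv' b)) \<le> w (a,b) - y a"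
  proof (intro allI impI)
    fix a b assume ab: "(a,b) \<in> M"
    then have "b \<noteq> c" using cu by auto
    then show "b \<in> S \<and> - kmin eps \<le> jv' b \<and> (\<forall>p\<in>set (Q' b). fst p \<le> jv' b) \<and>
          (1-eps) * (1+eps) powr (real_of_int (jv' b)) \<le> w (a,b) - y a"
      using i8 ab by (simp add: jv'_def Q'_def)
  qed
  have n9: "\<forall>b\<in>S. (\<forall>a. (a,b) \<notin> M) \<longrightarrow> Q' b = []"
  proof (intro ballI impI)
    fix b assume bS: "b \<in> S" and un: "\<forall>a. (a,b) \<notin> M"
    have "Q b = []" using i9 bS un by blast
    then have "b \<noteq> c" using hd by auto
    then show "Q' b = []" using \<open>Q b = []\<close> by (simp add: Q'_def)
  qed
  have "Inv S (M, y, jv', Q')"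
    unfolding Inv.simps by (intro conjI i1 i2 i3 i4 i5 n6 n7 n8 n9)
  then show ?thesis by (simp only: jv'_def Q'_def)
qed

lemma measure_dec:
  assumes "c \<in> V" "Q c = x # rest"
  shows "(\<Sum>v\<in>V. length ((Q(c := rest)) v)) < (\<Sum>v\<in>V. length (Q v))"
proof -
  have a: "(\<Sum>v\<in>V. length ((Q(c := rest)) v)) = length rest + (\<Sum>v\<in>V-{c}. length ((Q(c := rest)) v))"
    using sum.remove[OF finV assms(1), of "\<lambda>v. length ((Q(c := rest)) v)"] by (simp only: fun_upd_same)
  have b: "(\<Sum>v\<in>V-{c}. length ((Q(c := rest)) v)) = (\<Sum>v\<in>V-{c}. length (Q v))"
    by (rule sum.cong) auto
  have c: "(\<Sum>v\<in>V. length (Q v)) = length (Q c) + (\<Sum>v\<in>V-{c}. length (Q v))"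
    by (rule sum.remove[OF finV assms(1)])
  show ?thesis unfolding a b c using assms by simp
qed

lemma steal_sets:
  assumes I: "Inv S (M, y, jv, Q)" and uv: "(u,v') \<in> M"
  shows "{e\<in>M. fst e \<noteq> u} = M - {(u,v')}" "S - snd ` {e\<in>M. fst e = u} = S - {v'}"
    "v' \<in> S" "v' \<in> V"
proof -
  note i2 = Inv_i123(2)[OF I] and i1 = Inv_i123(1)[OF I]
  show "{e\<in>M. fst e \<noteq> u} = M - {(u,v')}" using i2 uv by fastforce
  have "snd ` {e\<in>M. fst e = u} = {v'}"
  proof
    show "snd ` {e\<in>M. fst e = u} \<subseteq> {v'}" using i2 uv by fastforce
    show "{v'} \<subseteq> snd ` {e\<in>M. fst e = u}" using uv by force
  qed
  then show "S - snd ` {e\<in>M. fst e = u} = S - {v'}" by simp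
  show "v' \<in> S" using Inv_matched[OF I uv] .
  show "v' \<in> V" using uv i1 EUV by auto
qed

lemma matchR_inv:
  "matchR eps w c s s' \<Longrightarrow> Inv S s \<Longrightarrow> c \<in> V \<Longrightarrow> (\<forall>x. (x,c) \<notin> fst s) \<Longrightarrow> Inv (insert c S) s'"
proof (induction arbitrary: S rule: matchR.induct)
  case (empty Q c M y jv)
  then show ?case using Inv_empty by simp
next
  case (fail Q c j u v rest y M jv s')
  have "Inv S (M, y, jv(c := j), Q(c := rest))"
    using fail_step[of S M y jv Q c j u v rest] fail by simp
  then show ?case using fail.IH fail.prems by simp
next
  case (free Q c j u v rest y M jv)
  have e1: "{e\<in>M. fst e \<noteq> u} = M" using free.hyps(3) by auto
  have e2: "S - snd ` {e\<in>M. fst e = u} = S" using free.hyps(3) by auto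
  have I: "Inv S (M, y, jv, Q)" using free.prems by simp
  have cu: "\<forall>x. (x,c) \<notin> M" using free.prems by simp
  have ms: "v = c \<and> Inv (insert c (S - snd ` {e\<in>M. fst e = u})) (insert (u, v) {e\<in>M. fst e \<noteq> u}, y(u := y u + eps * (w (u, v) - y u)), jv(c := j), Q(c := rest))"
    by (rule match_step[OF I free.prems(2) cu free.hyps(1) free.hyps(2) refl refl])
  then show ?case unfolding e1 e2 by (elim conjE) (hypsubst, assumption)
next
  case (steal Q c j u v rest y v' M jv s')
  note ss = steal_sets[of S M y jv Q u v']
  have I: "Inv S (M, y, jv, Q)" using steal.prems by simp
  have cu: "\<forall>x. (x,c) \<notin> M" using steal.prems by simp
  have ms: "v = c \<and> Inv (insert c (S - {v'})) (insert (u, v) (M - {(u, v')}), y(u := y u + eps * (w (u, v) - y u)), jv(c := j), Q(c := rest))"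
    using match_step[OF I steal.prems(2) cu steal.hyps(1) steal.hyps(2) refl refl]
    unfolding ss(1,2)[OF I steal.hyps(3)] .
  have v'c: "v' \<noteq> c" using cu steal.hyps(3) by auto
  have v'u: "\<forall>x. (x,v') \<notin> insert (u, v) (M - {(u, v')})"
  proof -
    note i3 = Inv_i123(3)[OF I]
    have v'v: "v' \<noteq> v" using v'c ms by simp
    show ?thesis using unm_after[OF i3 steal.hyps(3) v'v] .
  qed
  have vc: "v = c" using ms by simp
  from ms have ms2: "Inv (insert c (S - {v'})) (insert (u, v) (M - {(u, v')}), y(u := y u + eps * (w (u, v) - y u)), jv(c := j), Q(c := rest))"
    by (rule conjunct2)
  have v'u2: "\<forall>x. (x,v') \<notin> fst (insert (u, v) (M - {(u, v')}), y(u := y u + eps * (w (u, v) - y u)), jv(c := j), Q(c := rest))"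
    using v'u by simp
  have "Inv (insert v' (insert c (S - {v'}))) s'"
    by (rule steal.IH[OF ms2 ss(4)[OF I steal.hyps(3)] v'u2])
  moreover have "insert v' (insert c (S - {v'})) = insert c S" using ss[OF I steal.hyps(3)] by auto
  ultimately show ?case by simp
qed

lemma matchR_ex:
  "Inv S (M,y,jv,Q) \<Longrightarrow> c \<in> V \<Longrightarrow> \<forall>x. (x,c) \<notin> M \<Longrightarrow> \<exists>s'. matchR eps w c (M,y,jv,Q) s'"
proof (induction "\<Sum>v\<in>V. length (Q v)" arbitrary: S M y jv Q c rule: less_induct)
  case less
  show ?case
  proof (cases "Q c")
    case Nil
    then have "matchR eps w c (M,y,jv,Q) (M,y,jv,Q)" by (rule matchR.empty[where Q=Q and c=c])
    then show ?thesis by (rule exI)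
  next
    case (Cons x rest)
    obtain j u v where x: "x = (j,(u,v))" by (cases x) auto
    have hd: "Q c = (j,(u,v)) # rest" using Cons x by simp
    have dec: "(\<Sum>v\<in>V. length ((Q(c := rest)) v)) < (\<Sum>v\<in>V. length (Q v))"
      by (rule measure_dec[where Q=Q and c=c, OF less.prems(2) hd])
    show ?thesis
    proof (cases "w (u,v) - y u < (1+eps) powr (real_of_int j)")
      case True
      have I2: "Inv S (M, y, jv(c := j), Q(c := rest))"
        using fail_step[OF less.prems(1,2,3) hd True] .
      obtain s' where s': "matchR eps w c (M, y, jv(c := j), Q(c := rest)) s'"
        using less.hyps[OF dec I2 less.prems(2,3)] by (elim exE)
      have "matchR eps w c (M, y, jv, Q) s'"
        by (rule matchR.fail[where Q=Q and c=c and y=y and w=w, OF hd True s'])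
      then show ?thesis by (rule exI)
    next
      case False
      then have sc: "w (u,v) - y u \<ge> (1+eps) powr (real_of_int j)" by simp
      show ?thesis
      proof (cases "\<exists>v'. (u,v') \<in> M")
        case False
        then have "matchR eps w c (M,y,jv,Q) (insert (u, v) M, y(u := y u + eps * (w (u, v) - y u)), jv(c := j), Q(c := rest))"
          by (intro matchR.free[where Q=Q and c=c and y=y and w=w, OF hd sc])
        then show ?thesis by (rule exI)
      next
        case True
        then obtain v' where uv': "(u,v') \<in> M" by blast
        note ss = steal_sets[OF less.prems(1) uv']
        have ms: "v = c \<and> Inv (insert c (S - {v'})) (insert (u, v) (M - {(u, v')}), y(u := y u + eps * (w (u, v) - y u)), jv(c := j), Q(c := rest))"
          using match_step[OF less.prems(1,2,3) hd sc refl refl] unfolding ss(1,2) .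
        have v'c: "v' \<noteq> c" using less.prems(3) uv' by auto
        note i3 = Inv_i123(3)[OF less.prems(1)]
        have v'v: "v' \<noteq> v" using v'c ms by simp
        have v'u: "\<forall>x. (x,v') \<notin> insert (u, v) (M - {(u, v')})"
          using unm_after[OF i3 uv' v'v] .
        from ms have ms2: "Inv (insert c (S - {v'})) (insert (u, v) (M - {(u, v')}), y(u := y u + eps * (w (u, v) - y u)), jv(c := j), Q(c := rest))"
          by (rule conjunct2)
        obtain s' where s': "matchR eps w v' (insert (u, v) (M - {(u, v')}), y(u := y u + eps * (w (u, v) - y u)), jv(c := j), Q(c := rest)) s'"
          using less.hyps[OF dec ms2 ss(4) v'u] by (elim exE)
        have "matchR eps w c (M, y, jv, Q) s'"
          by (rule matchR.steal[where Q=Q and c=c and y=y and w=w, OF hd sc uv' s'])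
        then show ?thesis by (rule exI)
      qed
    qed
  qed
qed

lemma loop_inv:
  "alg_loop eps w cs s s' \<Longrightarrow> Inv S s \<Longrightarrow> set cs \<subseteq> V \<Longrightarrow> distinct cs \<Longrightarrow> set cs \<inter> S = {} \<Longrightarrow> Inv (S \<union> set cs) s'"
proof (induction arbitrary: S rule: alg_loop.induct)
  case (nil s)
  then show ?case by simp
next
  case (cons c s s' cs s'')
  obtain M y jv Q where s: "s = (M,y,jv,Q)" by (metis prod.collapse)
  have cu: "\<forall>x. (x,c) \<notin> M" using Inv_matched cons.prems s by fastforce
  have "Inv (insert c S) s'" using matchR_inv[OF cons.hyps(1)] cons.prems cu s by simp
  have "Inv (insert c S \<union> set cs) s''" by (rule cons.IH) (use \<open>Inv (insert c S) s'\<close> cons.prems in auto)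
  then show ?case by (simp del: Inv.simps)
qed

lemma loop_ex:
  "Inv S s \<Longrightarrow> set cs \<subseteq> V \<Longrightarrow> distinct cs \<Longrightarrow> set cs \<inter> S = {} \<Longrightarrow> \<exists>s'. alg_loop eps w cs s s'"
proof (induction cs arbitrary: S s)
  case Nil
  then show ?case using alg_loop.nil by blast
next
  case (Cons c cs)
  obtain M y jv Q where s: "s = (M,y,jv,Q)" by (metis prod.collapse)
  have cu: "\<forall>x. (x,c) \<notin> M" using Inv_matched Cons.prems s by fastforce
  obtain s' where m: "matchR eps w c s s'" using matchR_ex[of S M y jv Q c] Cons.prems cu s by auto
  have "Inv (insert c S) s'" using matchR_inv[OF m] Cons.prems cu s by simp
  then obtain s'' where "alg_loop eps w cs s' s''" using Cons.IH[of "insert c S" s'] Cons.prems by (auto simp del: Inv.simps)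
  then show ?case using alg_loop.cons[OF m] by blast
qed


lemma edge_bound:
  assumes I: "Inv V (M, y, jv, Q)" and uv: "(u',v) \<in> E"
  shows "w (u',v) \<le> y u' / (1-eps) + (if \<exists>a. (a,v) \<in> M then (1+eps)/(1-eps) * (w ((SOME a. (a,v) \<in> M), v) - y (SOME a. (a,v) \<in> M)) else 0)"
proof -
  have ee: "0 < 1 - eps" using e1 by simp
  note II = I[unfolded Inv.simps]
  have i1: "M \<subseteq> E"
    using II by (elim conjE) assumption
  have i2: "\<forall>u v v'. (u,v) \<in> M \<longrightarrow> (u,v') \<in> M \<longrightarrow> v = v'"
    using II by (elim conjE) assumption
  have i3: "\<forall>u u' v. (u,v) \<in> M \<longrightarrow> (u',v) \<in> M \<longrightarrow> u = u'"
    using II by (elim conjE) assumption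
  have i4: "\<forall>u. 0 \<le> y u"
    using II by (elim conjE) assumption
  have i5: "\<forall>u. y u \<noteq> 0 \<longrightarrow> (\<exists>v. (u,v) \<in> M)"
    using II by (elim conjE) assumption
  have i6: "\<forall>v\<in>V. \<exists>n. Q v = drop n (Q0 v)"
    using II by (elim conjE) assumption
  have i7: "\<forall>v\<in>V. \<forall>k u'. (k,(u',v)) \<in> set (Q0 v) \<longrightarrow> (k,(u',v)) \<notin> set (Q v) \<longrightarrow>
          w (u',v) - y u' < (1+eps) powr (real_of_int k)"
    using II by (elim conjE) assumption
  have i8: "\<forall>u v. (u,v) \<in> M \<longrightarrow> v \<in> V \<and> - kmin eps \<le> jv v \<and> (\<forall>p\<in>set (Q v). fst p \<le> jv v) \<and>
          (1-eps) * (1+eps) powr (real_of_int (jv v)) \<le> w (u,v) - y u"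
    using II by (elim conjE) assumption
  have i9: "\<forall>v\<in>V. (\<forall>u. (u,v) \<notin> M) \<longrightarrow> Q v = []"
    using II by (elim conjE) assumption

  have vV: "v \<in> V" using uv EUV by auto
  have w1': "1 \<le> w (u',v)" using w1 uv by auto
  have jge: "0 \<le> jedge eps w (u',v)" using floor_bound(2)[OF e0 w1'] by (simp add: jedge_def)
  have km: "0 \<le> kmin eps" "(1 + eps) powr (- real_of_int (kmin eps)) \<le> eps"
    using kmin_bound[OF e0] e1 by auto
  have yu0: "0 \<le> y u'" using i4 by simp
  have yle: "y u' \<le> y u' / (1-eps)" using yu0 ee e0 e1 by (simp add: field_simps)
  show ?thesis
  proof (cases "\<exists>a. (a,v) \<in> M")
    case True
    define a where "a = (SOME a. (a,v) \<in> M)"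
    have av: "(a,v) \<in> M" using True a_def by (metis someI_ex)
    from i8 av have jlo: "- kmin eps \<le> jv v" and qle: "\<forall>p\<in>set (Q v). fst p \<le> jv v"
      and ut: "(1-eps) * (1+eps) powr (real_of_int (jv v)) \<le> w (a,v) - y a" by blast+
    have bnd: "w (u',v) - y u' < (1+eps) powr (real_of_int (jv v) + 1)"
    proof (cases "jv v + 1 \<le> jedge eps w (u',v)")
      case True
      have "(jv v + 1, (u',v)) \<in> set (Q0 v)" by (rule q0in[OF vV uv]) (use jlo True in auto)
      moreover have "(jv v + 1, (u',v)) \<notin> set (Q v)" using qle by fastforce
      ultimately have "w (u',v) - y u' < (1+eps) powr (real_of_int (jv v + 1))" using i7 vV by blast
      then show ?thesis by simp
    next
      case False
      have "w (u',v) < (1+eps) powr (real_of_int (jedge eps w (u',v)) + 1)"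
        using floor_bound(1)[OF e0 w1'] by (simp add: jedge_def)
      also have "\<dots> \<le> (1+eps) powr (real_of_int (jv v) + 1)"
        by (rule powr_mono) (use False e0 in auto)
      finally show ?thesis using yu0 by linarith
    qed
    have "(1+eps) powr (real_of_int (jv v) + 1) = (1+eps) * (1+eps) powr (real_of_int (jv v))"
    proof -
      have "(1+eps) powr (real_of_int (jv v) + 1) = (1+eps) powr (real_of_int (jv v)) * (1+eps) powr 1"
        by (rule powr_add)
      also have "(1+eps) powr (1::real) = 1+eps" using e0 by simp
      finally show ?thesis by simp
    qed
    also have "\<dots> \<le> (1+eps)/(1-eps) * (w (a,v) - y a)"
    proof -
      have "(1+eps) powr (real_of_int (jv v)) \<le> (w (a,v) - y a) / (1-eps)"
        using ut ee by (simp add: field_simps)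
      then have "(1+eps) * (1+eps) powr (real_of_int (jv v)) \<le> (1+eps) * ((w (a,v) - y a) / (1-eps))"
        using e0 by (intro mult_left_mono) auto
      then show ?thesis by simp
    qed
    finally have "w (u',v) \<le> y u' + (1+eps)/(1-eps) * (w (a,v) - y a)" using bnd by linarith
    then show ?thesis using True yle a_def by simp
  next
    case False
    have qe: "Q v = []" using i9 vV False by blast
    have m1: "(- kmin eps, (u',v)) \<in> set (Q0 v)" by (rule q0in[OF vV uv]) (use km jge in auto)
    have m2: "(- kmin eps, (u',v)) \<notin> set (Q v)" using qe by simp
    have "w (u',v) - y u' < (1+eps) powr (real_of_int (- kmin eps))" using i7[rule_format, OF vV m1 m2] .
    moreover have "(1+eps) powr (real_of_int (- kmin eps)) = (1 + eps) powr (- real_of_int (kmin eps))" by simp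
    ultimately have lt: "w (u',v) - y u' < eps" using km(2) by linarith
    have "eps * 1 \<le> eps * w (u',v)" using w1' e0 by (intro mult_left_mono) auto
    moreover have "(1-eps) * w (u',v) = w (u',v) - eps * w (u',v)" by (simp add: algebra_simps)
    ultimately have "(1-eps) * w (u',v) < y u'" using lt by linarith
    then have "w (u',v) < y u' / (1-eps)" using ee by (simp add: field_simps)
    then show ?thesis using False by simp
  qed
qed

lemma final_bound:
  assumes I: "Inv V (M, y, jv, Q)" and opt: "is_matching E Mopt"
  shows "is_matching E M" "(1 - 2*eps) * sum w Mopt \<le> sum w M"
proof -
  have ee: "0 < 1 - eps" using e1 by simp
  note II = I[unfolded Inv.simps]
  have i1: "M \<subseteq> E"
    using II by (elim conjE) assumption
  have i2: "\<forall>u v v'. (u,v) \<in> M \<longrightarrow> (u,v') \<in> M \<longrightarrow> v = v'"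
    using II by (elim conjE) assumption
  have i3: "\<forall>u u' v. (u,v) \<in> M \<longrightarrow> (u',v) \<in> M \<longrightarrow> u = u'"
    using II by (elim conjE) assumption
  have i4: "\<forall>u. 0 \<le> y u"
    using II by (elim conjE) assumption
  have i5: "\<forall>u. y u \<noteq> 0 \<longrightarrow> (\<exists>v. (u,v) \<in> M)"
    using II by (elim conjE) assumption
  have i6: "\<forall>v\<in>V. \<exists>n. Q v = drop n (Q0 v)"
    using II by (elim conjE) assumption
  have i7: "\<forall>v\<in>V. \<forall>k u'. (k,(u',v)) \<in> set (Q0 v) \<longrightarrow> (k,(u',v)) \<notin> set (Q v) \<longrightarrow>
          w (u',v) - y u' < (1+eps) powr (real_of_int k)"
    using II by (elim conjE) assumption
  have i8: "\<forall>u v. (u,v) \<in> M \<longrightarrow> v \<in> V \<and> - kmin eps \<le> jv v \<and> (\<forall>p\<in>set (Q v). fst p \<le> jv v) \<and>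
          (1-eps) * (1+eps) powr (real_of_int (jv v)) \<le> w (u,v) - y u"
    using II by (elim conjE) assumption
  have i9: "\<forall>v\<in>V. (\<forall>u. (u,v) \<notin> M) \<longrightarrow> Q v = []"
    using II by (elim conjE) assumption

  show "is_matching E M" unfolding is_matching_def using i1 i2 i3 by blast
  have finE: "finite E" using finite_subset[OF EUV] finU finV by auto
  have finM: "finite M" using i1 finE finite_subset by auto
  have o1: "Mopt \<subseteq> E" and o2: "\<forall>u v v'. (u,v) \<in> Mopt \<longrightarrow> (u,v') \<in> Mopt \<longrightarrow> v = v'"
    and o3: "\<forall>u u' v. (u,v) \<in> Mopt \<longrightarrow> (u',v) \<in> Mopt \<longrightarrow> u = u'"
    using opt unfolding is_matching_def by blast+
  have finO: "finite Mopt" using o1 finE finite_subset by auto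
  define pa where "pa v = (SOME a. (a,v) \<in> M)" for v
  define g where "g v = (if \<exists>a. (a,v) \<in> M then (1+eps)/(1-eps) * (w (pa v, v) - y (pa v)) else 0)" for v
  define f where "f u = y u / (1-eps)" for u
  have g0: "0 \<le> g v" for v
  proof (cases "\<exists>a. (a,v) \<in> M")
    case True
    then have "(pa v, v) \<in> M" unfolding pa_def by (metis someI_ex)
    then have "(1-eps) * (1+eps) powr (real_of_int (jv v)) \<le> w (pa v,v) - y (pa v)" using i8 by blast
    moreover have "0 < (1-eps) * (1+eps) powr (real_of_int (jv v))" using ee P_pos by simp
    ultimately have "0 \<le> w (pa v,v) - y (pa v)" by linarith
    then show ?thesis using True ee e0 by (simp add: g_def)
  qed (simp add: g_def)
  have f0: "0 \<le> f u" for u using i4 ee by (simp add: f_def)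
  have pa_eq: "pa v = a" if "(a,v) \<in> M" for a v
  proof -
    have "(pa v, v) \<in> M" unfolding pa_def using that by (metis someI_ex)
    then show ?thesis using i3 that by blast
  qed
  have step1: "sum w Mopt \<le> (\<Sum>e\<in>Mopt. f (fst e) + g (snd e))"
  proof (rule sum_mono)
    fix e assume "e \<in> Mopt"
    then obtain u' v where e: "e = (u',v)" and "(u',v) \<in> E" using o1 by (cases e) auto
    then show "w e \<le> f (fst e) + g (snd e)"
      using edge_bound[OF I, of u' v] by (simp only: f_def g_def pa_def fst_conv snd_conv)
  qed
  have injfO: "inj_on fst Mopt" using o2 by (auto simp: inj_on_def)
  have injsO: "inj_on snd Mopt" using o3 by (auto simp: inj_on_def)
  have injfM: "inj_on fst M" using i2 by (auto simp: inj_on_def)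
  have injsM: "inj_on snd M" using i3 by (auto simp: inj_on_def)
  have s2: "(\<Sum>e\<in>Mopt. f (fst e) + g (snd e)) = (\<Sum>u\<in>fst ` Mopt. f u) + (\<Sum>v\<in>snd ` Mopt. g v)"
    by (simp add: sum.distrib sum.reindex[OF injfO] sum.reindex[OF injsO])
  have s3: "(\<Sum>u\<in>fst ` Mopt. f u) \<le> (\<Sum>u\<in>fst ` M. f u)"
  proof -
    have "(\<Sum>u\<in>fst ` Mopt. f u) \<le> (\<Sum>u\<in>U. f u)"
      by (rule sum_mono2[OF finU]) (use o1 EUV f0 in auto)
    also have "\<dots> = (\<Sum>u\<in>fst ` M. f u)"
    proof (rule sum.mono_neutral_right[OF finU])
      show "fst ` M \<subseteq> U" using i1 EUV by auto
      show "\<forall>i\<in>U - fst ` M. f i = 0"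
      proof
        fix i assume "i \<in> U - fst ` M"
        then have "\<forall>v. (i,v) \<notin> M" by force
        then have "y i = 0" using i5 by blast
        then show "f i = 0" by (simp add: f_def)
      qed
    qed
    finally show ?thesis .
  qed
  have s4: "(\<Sum>v\<in>snd ` Mopt. g v) \<le> (\<Sum>v\<in>snd ` M. g v)"
  proof -
    have "(\<Sum>v\<in>snd ` Mopt. g v) \<le> (\<Sum>v\<in>V. g v)"
      by (rule sum_mono2[OF finV]) (use o1 EUV g0 in auto)
    also have "\<dots> = (\<Sum>v\<in>snd ` M. g v)"
    proof (rule sum.mono_neutral_right[OF finV])
      show "snd ` M \<subseteq> V" using i1 EUV by auto
      show "\<forall>i\<in>V - snd ` M. g i = 0"
      proof
        fix i assume "i \<in> V - snd ` M"
        then have "\<not> (\<exists>a. (a,i) \<in> M)" by force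
        then show "g i = 0" by (simp add: g_def)
      qed
    qed
    finally show ?thesis .
  qed
  have s5: "(\<Sum>u\<in>fst ` M. f u) + (\<Sum>v\<in>snd ` M. g v) = (\<Sum>e\<in>M. f (fst e) + (1+eps)/(1-eps) * (w e - y (fst e)))"
  proof -
    have "(\<Sum>v\<in>snd ` M. g v) = (\<Sum>e\<in>M. g (snd e))" by (simp add: sum.reindex[OF injsM])
    also have "\<dots> = (\<Sum>e\<in>M. (1+eps)/(1-eps) * (w e - y (fst e)))"
    proof (rule sum.cong[OF refl])
      fix e assume eM: "e \<in> M"
      obtain a v where e: "e = (a,v)" by (cases e)
      then have "pa v = a" using pa_eq eM by simp
      then show "g (snd e) = (1+eps)/(1-eps) * (w e - y (fst e))" using e eM by (auto simp: g_def)
    qed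
    finally show ?thesis by (simp add: sum.distrib sum.reindex[OF injfM])
  qed
  have s6: "(1 - 2*eps) * (f (fst e) + (1+eps)/(1-eps) * (w e - y (fst e))) \<le> w e" if eM: "e \<in> M" for e
  proof -
    obtain a v where e: "e = (a,v)" by (cases e)
    have ya: "0 \<le> y a" using i4 by simp
    have "(1-eps) * (1+eps) powr (real_of_int (jv v)) \<le> w (a,v) - y a" using i8 eM e by blast
    moreover have "0 < (1-eps) * (1+eps) powr (real_of_int (jv v))" using ee P_pos by simp
    ultimately have t0: "0 \<le> w (a,v) - y a" by simp
    define t where "t = w (a,v) - y a"
    have "(1 - 2*eps) * (y a / (1-eps) + (1+eps)/(1-eps) * t) = (1-2*eps)*(y a + (1+eps)*t) / (1-eps)"
      by (simp add: add_divide_distrib[symmetric] times_divide_eq_right)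
    also have "\<dots> \<le> ((1-eps)*(y a + t)) / (1-eps)"
    proof (rule divide_right_mono)
      have tt: "0 \<le> t" using t0 t_def by simp
      have "(1-2*eps)*(y a + (1+eps)*t) = (1-2*eps)* y a + ((1-2*eps)*(1+eps))*t" by (simp add: algebra_simps)
      also have "\<dots> \<le> (1-eps)* y a + (1-eps)*t"
      proof (rule add_mono)
        show "(1-2*eps) * y a \<le> (1-eps) * y a" using ya e0 by (intro mult_right_mono) auto
        show "((1-2*eps)*(1+eps))*t \<le> (1-eps)*t"
        proof (rule mult_right_mono)
          show "(1-2*eps)*(1+eps) \<le> (1-eps)" using e0 by (simp add: algebra_simps)
          show "0 \<le> t" using tt .
        qed
      qed
      also have "\<dots> = (1-eps)*(y a + t)" by (simp add: algebra_simps)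
      finally show "(1-2*eps)*(y a + (1+eps)*t) \<le> (1-eps)*(y a + t)" .
      show "0 \<le> 1 - eps" using ee by simp
    qed
    also have "\<dots> = w (a,v)" using ee t_def by simp
    finally show ?thesis using e t_def by (simp add: f_def)
  qed
  have "(1 - 2*eps) * sum w Mopt \<le> (1 - 2*eps) * (\<Sum>e\<in>M. f (fst e) + (1+eps)/(1-eps) * (w e - y (fst e)))"
    using step1 s2 s3 s4 s5 e1 by (intro mult_left_mono) auto
  also have "\<dots> = (\<Sum>e\<in>M. (1 - 2*eps) * (f (fst e) + (1+eps)/(1-eps) * (w e - y (fst e))))"
    by (simp add: sum_distrib_left)
  also have "\<dots> \<le> sum w M" by (rule sum_mono) (rule s6)
  finally show "(1 - 2*eps) * sum w Mopt \<le> sum w M" .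
qed

lemma Inv_init: "Inv {} ({}, (\<lambda>_. 0), jv, Q0)"
  unfolding Inv.simps
proof (intro conjI)
  show "\<forall>v\<in>V. \<exists>n. Q0 v = drop n (Q0 v)" by (metis drop0)
qed auto

end

theorem lemma2:
  fixes U :: "'u set" and V :: "'v set" and E :: "('u \<times> 'v) set"
    and w :: "'u \<times> 'v \<Rightarrow> real" and eps' :: real
    and Q0 :: "'v \<Rightarrow> (int \<times> ('u \<times> 'v)) list" and vs :: "'v list"
  assumes "finite U" and "finite V" and "E \<subseteq> U \<times> V"
    and "\<forall>e\<in>E. w e \<ge> 1"
    and "0 < eps'" and "eps' < 1"
    and "\<forall>v\<in>V. valid_queue (eps' / 2) E w v (Q0 v)"
    and "distinct vs" and "set vs = V"
  shows "(\<exists>M. algA (eps' / 2) E w Q0 vs M) \<and>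
         (\<forall>M. algA (eps' / 2) E w Q0 vs M \<longrightarrow>
            is_matching E M \<and>
            (\<forall>Mopt. is_matching E Mopt \<longrightarrow> sum w M \<ge> (1 - eps') * sum w Mopt))"
proof -
  interpret alg "eps'/2" U V E w Q0
    using assms by unfold_locales auto
  have I0: "Inv {} ({}, (\<lambda>_. 0), (\<lambda>_. kmax (eps'/2) E w), Q0)" by (rule Inv_init)
  have ex: "\<exists>M. algA (eps' / 2) E w Q0 vs M"
  proof -
    obtain s' where s': "alg_loop (eps'/2) w vs ({}, (\<lambda>_. 0), (\<lambda>_. kmax (eps'/2) E w), Q0) s'"
      using loop_ex[OF I0, of vs] assms(8,9) by auto
    obtain M y jv Q where "s' = (M,y,jv,Q)" using prod_cases4 by blast
    then show ?thesis using s' unfolding algA_def by blast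
  qed
  have all: "is_matching E M \<and> (\<forall>Mopt. is_matching E Mopt \<longrightarrow> sum w M \<ge> (1 - eps') * sum w Mopt)"
    if h: "algA (eps' / 2) E w Q0 vs M" for M
  proof -
    obtain y jv Q where l: "alg_loop (eps'/2) w vs ({}, (\<lambda>_. 0), (\<lambda>_. kmax (eps'/2) E w), Q0) (M, y, jv, Q)"
      using h unfolding algA_def by blast
    have "Inv ({} \<union> set vs) (M, y, jv, Q)"
      by (rule loop_inv[OF l I0]) (use assms(8,9) in auto)
    then have I: "Inv V (M, y, jv, Q)" using assms(9) by simp
    have m: "is_matching E M" using final_bound(1)[OF I, of "{}"] by (simp add: is_matching_def)
    have "\<forall>Mopt. is_matching E Mopt \<longrightarrow> sum w M \<ge> (1 - eps') * sum w Mopt"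
      using final_bound(2)[OF I] by simp
    then show ?thesis using m by blast
  qed
  show ?thesis using ex all by blast
qed

end
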